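(* Let $H$ be a Hermitian operator with $\omega^{(\max)}(H)=\lambda_{\max}(H)-\lambda_{\min}(H)>0$, $A$ an operator on a finite-dimensional Hilbert space, and $\mathcal{U}_\theta(A)=e^{i\theta H}Ae^{-i\theta H}$ for $\theta\in\mathbb{R}$. Then: (1) for every $p\ge1$ and $\phi\in\mathbb{R}$, $\mathcal{U}^{(p)}_\phi(A):=\frac{d^p}{d\theta^p}\mathcal{U}_\theta(A)\big|_{\theta=\phi}=i^p\,\mathcal{U}_\phi\big([(H)^p,A]\big)$, where $[(H)^p,A]$ is the $p$-fold nested commutator $[H,[H,\dots,[H,A]]]$; (2) for every $p\ge2$ and $\phi\in\mathbb{R}$, $$\big\|\mathcal{U}^{(p)}_\phi(A)\big\|_\infty\le\big(2\omega^{(\max)}(H)\big)^p\frac{\|[H,[H,A]]\|_\infty}{4\omega^{(\max)}(H)^2}.$$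
   Context: $\|\cdot\|_\infty$ is the operator norm; $\lambda_{\max},\lambda_{\min}$ denote the largest and smallest eigenvalues. *)

theory Defs
  imports "HOL-Analysis.Analysis"
begin

type_synonym 'n cmat = "complex ^ 'n ^ 'n"

definition cscale :: "complex \<Rightarrow> 'n::finite cmat \<Rightarrow> 'n cmat" where
  "cscale c M = (\<chi> i j. c * M $ i $ j)"

definition adjoint_mat :: "'n::finite cmat \<Rightarrow> 'n cmat" where
  "adjoint_mat M = (\<chi> i j. cnj (M $ j $ i))"

definition hermitian :: "'n::finite cmat \<Rightarrow> bool" where
  "hermitian M \<longleftrightarrow> adjoint_mat M = M"

fun mpow :: "'n::finite cmat \<Rightarrow> nat \<Rightarrow> 'n cmat" where
  "mpow M 0 = mat 1"
| "mpow M (Suc k) = M ** mpow M k"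

definition mexp :: "'n::finite cmat \<Rightarrow> 'n cmat" where
  "mexp M = (\<Sum>k. (1 / fact k) *\<^sub>R mpow M k)"

definition commutator :: "'n::finite cmat \<Rightarrow> 'n cmat \<Rightarrow> 'n cmat" where
  "commutator X Y = X ** Y - Y ** X"

fun nested_comm :: "'n::finite cmat \<Rightarrow> nat \<Rightarrow> 'n cmat \<Rightarrow> 'n cmat" where
  "nested_comm H 0 A = A"
| "nested_comm H (Suc p) A = commutator H (nested_comm H p A)"

definition op_norm :: "'n::finite cmat \<Rightarrow> real" where
  "op_norm M = onorm (\<lambda>x. M *v x)"

definition eigenvalues :: "'n::finite cmat \<Rightarrow> complex set" where
  "eigenvalues M = {\<mu>. \<exists>v. v \<noteq> 0 \<and> M *v v = \<mu> *s v}"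

definition lambda_max :: "'n::finite cmat \<Rightarrow> real" where
  "lambda_max M = Max (Re ` eigenvalues M)"

definition lambda_min :: "'n::finite cmat \<Rightarrow> real" where
  "lambda_min M = Min (Re ` eigenvalues M)"

definition omega_max :: "'n::finite cmat \<Rightarrow> real" where
  "omega_max H = lambda_max H - lambda_min H"

definition conj_evol :: "'n::finite cmat \<Rightarrow> real \<Rightarrow> 'n cmat \<Rightarrow> 'n cmat" where
  "conj_evol H \<theta> A = mexp (cscale (\<i> * of_real \<theta>) H) ** A ** mexp (cscale (- \<i> * of_real \<theta>) H)"

definition nth_vderiv :: "nat \<Rightarrow> (real \<Rightarrow> 'a::real_normed_vector) \<Rightarrow> real \<Rightarrow> 'a" where
  "nth_vderiv p f = ((\<lambda>g x. vector_derivative g (at x)) ^^ p) f"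

end

theory Submission
  imports Defs
begin
definition cinner :: "complex^'n::finite \<Rightarrow> complex^'n \<Rightarrow> complex" where
  "cinner v w = (\<Sum>i\<in>UNIV. v$i * cnj (w$i))"

lemma inner_cinner: "v \<bullet> w = Re (cinner v w)"
  by (simp add: cinner_def inner_vec_def inner_complex_def)

lemma herm_entry2: "hermitian H \<Longrightarrow> cnj (H$j$i) = H$i$j"
  unfolding hermitian_def adjoint_mat_def
  by (metis (no_types, lifting) vec_lambda_beta)

lemma herm_cinner:
  assumes "hermitian H"
  shows "cinner (H *v v) w = cinner v (H *v w)"
proof -
  have "cinner (H *v v) w = (\<Sum>i\<in>UNIV. \<Sum>j\<in>UNIV. H$i$j * v$j * cnj (w$i))"
    unfolding cinner_def matrix_vector_mult_def vec_lambda_beta sum_distrib_right ..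
  also have "\<dots> = (\<Sum>j\<in>UNIV. \<Sum>i\<in>UNIV. H$i$j * v$j * cnj (w$i))"
    by (rule sum.swap)
  also have "\<dots> = cinner v (H *v w)"
    unfolding cinner_def matrix_vector_mult_def vec_lambda_beta cnj_sum sum_distrib_left complex_cnj_mult herm_entry2[OF assms]
    by (rule sum.cong[OF refl], rule sum.cong[OF refl]) (simp add: mult_ac)
  finally show ?thesis .
qed

lemma cinner_smult_left: "cinner (c *s v) w = c * cinner v w"
  by (simp add: cinner_def sum_distrib_left mult.assoc)

lemma cinner_smult_right: "cinner v (c *s w) = cnj c * cinner v w"
  by (simp add: cinner_def sum_distrib_left mult_ac)

lemma cinner_diff_left: "cinner (v - u) w = cinner v w - cinner u w"
  by (simp add: cinner_def sum_subtractf algebra_simps)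

lemma cinner_self: "cinner v v = complex_of_real ((norm v)^2)"
proof -
  have "cinner v v = (\<Sum>i\<in>UNIV. complex_of_real ((cmod (v$i))^2))"
    unfolding cinner_def by (rule sum.cong[OF refl]) (simp add: complex_norm_square[symmetric])
  also have "\<dots> = complex_of_real (\<Sum>i\<in>UNIV. (cmod (v$i))^2)" by simp
  also have "(\<Sum>i\<in>UNIV. (cmod (v$i))^2) = (norm v)^2"
    by (simp add: norm_vec_def L2_set_def sum_nonneg)
  finally show ?thesis .
qed

lemma scaleR_smult: "(r::real) *\<^sub>R (v::complex^'n) = complex_of_real r *s v"
  unfolding vec_eq_iff vector_scaleR_component vector_smult_component by (simp add: scaleR_conv_of_real)

lemma smult_inj: "(a::complex) *s v = b *s v \<Longrightarrow> v \<noteq> 0 \<Longrightarrow> a = b"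
  by (metis (no_types, lifting) mult_right_cancel vec_eq_iff vector_smult_component zero_index)

lemma herm_eig_real:
  assumes "hermitian H" "v \<noteq> 0" "H *v v = \<mu> *s v"
  shows "cnj \<mu> = \<mu>"
proof -
  have "\<mu> * cinner v v = cnj \<mu> * cinner v v"
    using herm_cinner[OF assms(1), of v v] assms(3)
    by (simp add: cinner_smult_left cinner_smult_right)
  moreover have "cinner v v \<noteq> 0" using assms(2) by (simp add: cinner_self)
  ultimately show ?thesis by simp
qed

lemma herm_eig_finite:
  assumes herm: "hermitian H"
  shows "finite (eigenvalues H)"
proof -
  define ev where "ev \<mu> = (SOME v. v \<noteq> 0 \<and> H *v v = \<mu> *s v)" for \<mu>
  have ev: "ev \<mu> \<noteq> 0 \<and> H *v ev \<mu> = \<mu> *s ev \<mu>" if "\<mu> \<in> eigenvalues H" for \<mu>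
    using that unfolding eigenvalues_def ev_def by (rule CollectE) (rule someI_ex)
  have inj: "inj_on ev (eigenvalues H)"
    by (rule inj_onI) (metis ev smult_inj)
  have orth: "pairwise orthogonal (ev ` eigenvalues H)"
  proof (rule pairwiseI, elim imageE)
    fix x y \<mu> \<nu> assume xy: "x \<noteq> y" and x: "x = ev \<mu>" "\<mu> \<in> eigenvalues H"
      and y: "y = ev \<nu>" "\<nu> \<in> eigenvalues H"
    have "\<mu> \<noteq> \<nu>" using xy x y by auto
    have r: "cnj \<nu> = \<nu>" using herm_eig_real[OF herm] ev[OF y(2)] by blast
    have "\<mu> * cinner x y = cnj \<nu> * cinner x y"
      using herm_cinner[OF herm, of x y] ev[OF x(2)] ev[OF y(2)] x y
      by (simp add: cinner_smult_left cinner_smult_right)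
    then have "cinner x y = 0" using \<open>\<mu> \<noteq> \<nu>\<close> r by simp
    then show "orthogonal x y" by (simp add: orthogonal_def inner_cinner)
  qed
  have "finite (ev ` eigenvalues H)" by (rule pairwise_orthogonal_imp_finite[OF orth])
  then show ?thesis using inj finite_imageD by blast
qed

lemma bl_mv: "bounded_linear (\<lambda>v. (M::complex^'n^'n) *v v)"
  by (simp add: linear_conv_bounded_linear matrix_vector_mul_linear)

lemma norm_diff_sq: "(norm (a - b))^2 = (norm a)^2 - 2 * (a \<bullet> b) + (norm (b::'a::real_inner))^2"
  by (simp add: power2_norm_eq_inner inner_diff inner_commute)

lemma herm_norm_bound:
  fixes K :: "complex^'n^'n"
  assumes herm: "hermitian K" and b: "0 \<le> b"
    and up: "\<And>\<mu>. \<mu> \<in> eigenvalues K \<Longrightarrow> Re \<mu> \<le> b"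
    and lo: "\<And>\<mu>. \<mu> \<in> eigenvalues K \<Longrightarrow> 0 \<le> Re \<mu>"
  shows "norm (K *v v) \<le> b * norm (v::complex^'n)"
proof -
  interpret k: bounded_linear "\<lambda>v. K *v v" by (rule bl_mv)
  have sa: "(K *v u) \<bullet> w = u \<bullet> (K *v w)" for u w
    by (simp add: inner_cinner herm_cinner[OF herm])
  obtain i :: 'n where True by blast
  have ne: "sphere (0::complex^'n) 1 \<noteq> {}"
  proof -
    have "(axis i (1::complex) :: complex^'n) \<in> sphere 0 1" by (simp add: norm_axis_1)
    then show ?thesis by blast
  qed
  have cont: "continuous_on (sphere 0 1) (\<lambda>v. norm (K *v v))"
    by (intro continuous_intros k.continuous_on continuous_on_id)
  obtain x where x: "x \<in> sphere 0 1" and xmax: "\<And>y. y \<in> sphere 0 1 \<Longrightarrow> norm (K *v y) \<le> norm (K *v x)"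
    using continuous_attains_sup[OF compact_sphere ne cont] by blast
  have nx: "norm x = 1" using x by simp
  define s where "s = norm (K *v x)"
  have s0: "0 \<le> s" by (simp add: s_def)
  have bound: "norm (K *v y) \<le> s * norm y" for y
  proof (cases "y = 0")
    case True then show ?thesis by simp
  next
    case False
    have "norm (K *v (y /\<^sub>R norm y)) \<le> s"
      unfolding s_def by (rule xmax) (use False in simp)
    then show ?thesis using False
      by (simp add: k.scaleR divide_simps mult.commute)
  qed
  have eig: "K *v (K *v x) = (s^2) *\<^sub>R x"
  proof -
    let ?a = "K *v (K *v x)" and ?b = "(s^2) *\<^sub>R x"
    have na: "norm ?a \<le> s^2" using bound[of "K *v x"] by (simp add: s_def power2_eq_square)
    have nb: "norm ?b = s^2" using nx by simp
    have ab: "?a \<bullet> ?b = s^2 * s^2"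
      using sa[of "K *v x" x] by (simp add: s_def power2_norm_eq_inner)
    have xx: "x \<bullet> x = 1" by (metis nx power2_norm_eq_inner one_power2)
    have "(norm (?a - ?b))^2 = (norm ?a)^2 - 2 * (?a \<bullet> ?b) + (s^2)^2"
      using norm_diff_sq[of ?a ?b] unfolding nb by simp
    also have "\<dots> \<le> 0"
    proof -
      have "(norm ?a)^2 \<le> (s^2)^2" using na by (intro power_mono) auto
      moreover have "(s^2)^2 = s^2 * s^2" by (simp add: power2_eq_square)
      ultimately show ?thesis using ab by linarith
    qed
    finally have "norm (?a - ?b) = 0" by simp
    then show ?thesis by simp
  qed
  have "s \<le> b"
  proof (cases "s = 0")
    case True then show ?thesis using b by simp
  next
    case False
    then have sp: "s > 0" using s0 by simp
    define y where "y = K *v x + s *\<^sub>R x"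
    show ?thesis
    proof (cases "y = 0")
      case True
      then have "K *v x = complex_of_real (- s) *s x"
        unfolding y_def scaleR_smult[symmetric] by (simp add: eq_neg_iff_add_eq_0)
      moreover have "x \<noteq> 0" using nx by auto
      ultimately have "complex_of_real (- s) \<in> eigenvalues K"
        unfolding eigenvalues_def by blast
      then have "0 \<le> - s" using lo by fastforce
      then show ?thesis using sp by simp
    next
      case False
      have "K *v y = s *\<^sub>R y"
        unfolding y_def by (simp add: k.add k.scaleR eig power2_eq_square scaleR_add_right)
      then have "K *v y = complex_of_real s *s y" by (simp add: scaleR_smult)
      then have "complex_of_real s \<in> eigenvalues K"
        unfolding eigenvalues_def using False by blast
      then show ?thesis using up by fastforce
    qed
  qed
  then show ?thesis using bound[of v] by (meson mult_right_mono norm_ge_zero order_trans)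
qed

lemma cscale_mv: "cscale c M *v v = c *s (M *v v)"
  by (simp add: vec_eq_iff cscale_def matrix_vector_mult_def sum_distrib_left mult.assoc)

lemma shift_bound:
  fixes H :: "complex^'n^'n"
  assumes herm: "hermitian H" and gap: "omega_max H > 0"
  shows "norm (H *v v - complex_of_real (lambda_min H) *s v) \<le> omega_max H * norm v"
proof -
  define c where "c = lambda_min H"
  define K where "K = H - cscale (complex_of_real c) (mat 1)"
  have Kv: "K *v w = H *v w - complex_of_real c *s w" for w
    by (simp add: K_def matrix_vector_mult_diff_rdistrib cscale_mv)
  have hK0: "cnj (K$j$i) = K$i$j" for i j
    by (simp add: K_def cscale_def mat_def herm_entry2[OF herm])
  have hK: "hermitian K"
    unfolding hermitian_def adjoint_mat_def by (simp add: vec_eq_iff hK0)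
  have fin: "finite (Re ` eigenvalues H)" using herm_eig_finite[OF herm] by simp
  have shift: "\<mu> + complex_of_real c \<in> eigenvalues H" if "\<mu> \<in> eigenvalues K" for \<mu>
  proof -
    have "\<exists>v. v \<noteq> 0 \<and> K *v v = \<mu> *s v" using that by (simp add: eigenvalues_def)
    then obtain v where "v \<noteq> 0" "K *v v = \<mu> *s v" by blast
    then have "H *v v = (\<mu> + complex_of_real c) *s v"
    proof -
      have "H *v v = K *v v + complex_of_real c *s v" by (simp add: Kv)
      also have "\<dots> = (\<mu> + complex_of_real c) *s v" by (simp only: \<open>K *v v = \<mu> *s v\<close> vector_sadd_rdistrib)
      finally show ?thesis .
    qed
    then show ?thesis using \<open>v \<noteq> 0\<close> unfolding eigenvalues_def by (intro CollectI exI conjI)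
  qed
  have "norm (K *v v) \<le> omega_max H * norm v"
  proof (rule herm_norm_bound[OF hK])
    show "0 \<le> omega_max H" using gap by simp
  next
    fix \<mu> assume "\<mu> \<in> eigenvalues K"
    then have m: "\<mu> + complex_of_real c \<in> eigenvalues H" by (rule shift)
    have "Re (\<mu> + complex_of_real c) \<le> lambda_max H"
      unfolding lambda_max_def using fin imageI[OF m, of Re] by (rule Max_ge)
    then show "Re \<mu> \<le> omega_max H" by (simp add: omega_max_def c_def)
    have "lambda_min H \<le> Re (\<mu> + complex_of_real c)"
      unfolding lambda_min_def using fin imageI[OF m, of Re] by (rule Min_le)
    then show "0 \<le> Re \<mu>" by (simp add: c_def)
  qed
  then show ?thesis by (simp add: Kv c_def)
qed

lemma op_norm_le: "norm (M *v v) \<le> op_norm M * norm v"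
  unfolding op_norm_def by (rule onorm[OF bl_mv])

lemma op_norm_nonneg: "0 \<le> op_norm M"
  unfolding op_norm_def by (rule onorm_pos_le[OF bl_mv])

lemma comm_bound:
  fixes H :: "complex^'n^'n"
  assumes herm: "hermitian H" and gap: "omega_max H > 0"
  shows "op_norm (commutator H X) \<le> 2 * omega_max H * op_norm X"
proof -
  have pt: "norm (commutator H X *v v) \<le> 2 * omega_max H * op_norm X * norm v" for v :: "complex^'n"
  proof -
    define c where "c = complex_of_real (lambda_min H)"
    define k where "k w = H *v w - c *s w" for w
    have "commutator H X *v v = k (X *v v) - X *v k v"
      by (simp add: commutator_def k_def matrix_vector_mult_diff_rdistrib matrix_vector_mult_diff_distrib
          matrix_vector_mul_assoc[symmetric] vector_scalar_commute)
    then have e: "norm (commutator H X *v v) \<le> norm (k (X *v v)) + norm (X *v k v)"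
      by (metis norm_triangle_ineq4)
    have a1: "norm (k (X *v v)) \<le> omega_max H * norm (X *v v)"
      unfolding k_def c_def by (rule shift_bound[OF herm gap])
    have a2: "norm (X *v k v) \<le> op_norm X * norm (k v)" by (rule op_norm_le)
    have a3: "norm (k v) \<le> omega_max H * norm v"
      unfolding k_def c_def by (rule shift_bound[OF herm gap])
    have a4: "norm (X *v v) \<le> op_norm X * norm v" by (rule op_norm_le)
    have w0: "0 \<le> omega_max H" using gap by simp
    have b1: "omega_max H * norm (X *v v) \<le> omega_max H * (op_norm X * norm v)"
      by (rule mult_left_mono[OF a4 w0])
    have b2: "op_norm X * norm (k v) \<le> op_norm X * (omega_max H * norm v)"
      by (rule mult_left_mono[OF a3 op_norm_nonneg])
    have "omega_max H * (op_norm X * norm v) + op_norm X * (omega_max H * norm v)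
        = 2 * omega_max H * op_norm X * norm v" by (simp add: algebra_simps)
    then show ?thesis using e a1 a2 b1 b2 by linarith
  qed
  have "0 \<le> 2 * omega_max H * op_norm X" using gap op_norm_nonneg[of X] by simp
  then show ?thesis unfolding op_norm_def[of "commutator H X"] using pt by (rule onorm_bound)
qed

lemma nested_bound:
  fixes H :: "complex^'n^'n"
  assumes herm: "hermitian H" and gap: "omega_max H > 0"
  shows "op_norm (nested_comm H (p + 2) A) \<le> (2 * omega_max H)^p * op_norm (nested_comm H 2 A)"
proof (induction p)
  case 0 then show ?case by (simp add: eval_nat_numeral)
next
  case (Suc p)
  have "op_norm (nested_comm H (Suc p + 2) A) \<le> 2 * omega_max H * op_norm (nested_comm H (p + 2) A)"
    using comm_bound[OF herm gap] by simp
  also have "\<dots> \<le> 2 * omega_max H * ((2 * omega_max H)^p * op_norm (nested_comm H 2 A))"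
    using Suc gap by (intro mult_left_mono) auto
  finally show ?case by (simp add: mult_ac)
qed

typedef (overloaded) 'a endo = "UNIV :: ('a::euclidean_space \<Rightarrow>\<^sub>L 'a) set"
  morphisms ea Ea by simp

setup_lifting type_definition_endo

instantiation endo :: (euclidean_space) real_normed_algebra_1
begin

lift_definition zero_endo :: "'a endo" is 0 .
lift_definition one_endo :: "'a endo" is id_blinfun .
lift_definition plus_endo :: "'a endo \<Rightarrow> 'a endo \<Rightarrow> 'a endo" is "(+)" .
lift_definition minus_endo :: "'a endo \<Rightarrow> 'a endo \<Rightarrow> 'a endo" is "(-)" .
lift_definition uminus_endo :: "'a endo \<Rightarrow> 'a endo" is uminus .
lift_definition scaleR_endo :: "real \<Rightarrow> 'a endo \<Rightarrow> 'a endo" is scaleR .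
lift_definition times_endo :: "'a endo \<Rightarrow> 'a endo \<Rightarrow> 'a endo" is blinfun_compose .
lift_definition norm_endo :: "'a endo \<Rightarrow> real" is norm .

definition dist_endo :: "'a endo \<Rightarrow> 'a endo \<Rightarrow> real" where
  "dist_endo a b = norm (a - b)"

definition sgn_endo :: "'a endo \<Rightarrow> 'a endo" where
  "sgn_endo x = scaleR (inverse (norm x)) x"

definition uniformity_endo :: "('a endo \<times> 'a endo) filter" where
  "uniformity_endo = (INF e\<in>{0 <..}. principal {(x, y). dist x y < e})"

definition open_endo :: "'a endo set \<Rightarrow> bool" where
  "open_endo S = (\<forall>x\<in>S. \<forall>\<^sub>F (x', y) in uniformity. x' = x \<longrightarrow> y \<in> S)"

instance
proof
  fix a b c :: "'a endo" and r s :: real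
  show "a + b + c = a + (b + c)" by transfer (simp add: algebra_simps)
  show "a + b = b + a" by transfer (simp add: algebra_simps)
  show "0 + a = a" by transfer simp
  show "- a + a = 0" by transfer simp
  show "a - b = a + - b" by transfer simp
  show "r *\<^sub>R (a + b) = r *\<^sub>R a + r *\<^sub>R b" by transfer (simp add: scaleR_add_right)
  show "(r + s) *\<^sub>R a = r *\<^sub>R a + s *\<^sub>R a" by transfer (simp add: scaleR_add_left)
  show "r *\<^sub>R s *\<^sub>R a = (r * s) *\<^sub>R a" by transfer simp
  show "1 *\<^sub>R a = a" by transfer simp
  show "a * b * c = a * (b * c)" by transfer (rule blinfun_eqI, simp)
  show "(a + b) * c = a * c + b * c" by transfer (rule blinfun_eqI, simp add: blinfun.bilinear_simps)
  show "a * (b + c) = a * b + a * c" by transfer (rule blinfun_eqI, simp add: blinfun.bilinear_simps)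
  show "r *\<^sub>R a * b = r *\<^sub>R (a * b)" by transfer (rule blinfun_eqI, simp add: blinfun.bilinear_simps)
  show "a * r *\<^sub>R b = r *\<^sub>R (a * b)" by transfer (rule blinfun_eqI, simp add: blinfun.bilinear_simps)
  show "1 * a = a" by transfer (rule blinfun_eqI, simp)
  show "a * 1 = a" by transfer (rule blinfun_eqI, simp)
  show "(0::'a endo) \<noteq> 1"
  proof transfer
    obtain i :: 'a where "i \<in> Basis" using nonempty_Basis by blast
    then have "blinfun_apply (0::'a\<Rightarrow>\<^sub>L'a) i \<noteq> blinfun_apply id_blinfun i"
      by (auto simp: nonzero_Basis)
    then show "(0::'a\<Rightarrow>\<^sub>L'a) \<noteq> id_blinfun" by metis
  qed
  show "dist a b = norm (a - b)" by (simp add: dist_endo_def)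
  show "sgn a = inverse (norm a) *\<^sub>R a" by (simp add: sgn_endo_def)
  show "(uniformity :: ('a endo \<times> 'a endo) filter) = (INF e\<in>{0 <..}. principal {(x, y). dist x y < e})"
    by (simp add: uniformity_endo_def)
  show "norm a = 0 \<longleftrightarrow> a = 0" by transfer simp
  show "norm (a + b) \<le> norm a + norm b" by transfer (rule norm_triangle_ineq)
  show "norm (r *\<^sub>R a) = \<bar>r\<bar> * norm a" by transfer simp
  show "norm (a * b) \<le> norm a * norm b" by transfer (rule norm_blinfun_compose)
  show "norm (1::'a endo) = 1" by transfer (rule norm_blinfun_id)
next
  fix U :: "'a endo set"
  show "open U = (\<forall>x\<in>U. \<forall>\<^sub>F (x', y) in uniformity. x' = x \<longrightarrow> y \<in> U)"
    by (simp add: open_endo_def)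
qed

end

lemma dist_endo_ea: "dist x y = dist (ea x) (ea y)"
  unfolding dist_endo_def dist_norm by transfer simp

instance endo :: (euclidean_space) banach
proof
  fix X :: "nat \<Rightarrow> 'a endo"
  assume "Cauchy X"
  then have "Cauchy (\<lambda>n. ea (X n))"
    unfolding Cauchy_def dist_endo_ea by simp
  then obtain L where L: "(\<lambda>n. ea (X n)) \<longlonglongrightarrow> L"
    using Cauchy_convergent_iff convergent_def by blast
  have "X \<longlonglongrightarrow> Ea L"
    unfolding lim_sequentially dist_endo_ea
    using L[unfolded lim_sequentially] by (simp add: Ea_inverse)
  then show "convergent X" by (auto simp: convergent_def)
qed

definition Lm :: "complex^'n^'n \<Rightarrow> (complex^'n) endo" where
  "Lm M = Ea (Blinfun (\<lambda>x. M *v x))"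

definition Rm :: "(complex^'n) endo \<Rightarrow> complex^'n^'n" where
  "Rm f = (\<chi> i j. blinfun_apply (ea f) (axis j 1) $ i)"

lemma ea_Lm_apply: "blinfun_apply (ea (Lm M)) x = M *v x"
  by (simp add: Lm_def Ea_inverse bounded_linear_Blinfun_apply[OF bl_mv])

lemma Lm_eqI: "(\<And>x. blinfun_apply (ea f) x = M *v x) \<Longrightarrow> Lm M = f"
  by (metis blinfun_eqI ea_Lm_apply ea_inject)

lemma mv_axis: "(M *v axis j 1) $ i = M $ i $ (j::'n::finite)"
proof -
  have "(M *v axis j 1) $ i = (\<Sum>k\<in>UNIV. if k = j then M $ i $ k else 0)"
    unfolding matrix_vector_mult_def axis_def by (simp add: if_distrib cong: if_cong)
  also have "\<dots> = M $ i $ j" by simp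
  finally show ?thesis .
qed

lemma scaleR_mv: "(r *\<^sub>R (M::complex^'n^'m)) *v x = r *\<^sub>R (M *v x)"
  unfolding vec_eq_iff matrix_vector_mult_def vector_scaleR_component vec_lambda_beta
  by (simp add: scaleR_conv_of_real sum_distrib_left mult.assoc)

lemma Rm_Lm: "Rm (Lm M) = M"
  by (simp add: Rm_def ea_Lm_apply vec_eq_iff mv_axis)

lemma Lm_inj: "Lm M = Lm N \<Longrightarrow> M = N"
  by (metis Rm_Lm)

lemma Lm_mult: "Lm (M ** N) = Lm M * Lm N"
  by (rule Lm_eqI) (simp add: times_endo.rep_eq ea_Lm_apply matrix_vector_mul_assoc)

lemma Lm_one: "Lm (mat 1) = 1"
  by (rule Lm_eqI) (simp add: one_endo.rep_eq)

lemma Lm_add: "Lm (M + N) = Lm M + Lm N"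
  by (rule Lm_eqI) (simp add: plus_endo.rep_eq blinfun.bilinear_simps ea_Lm_apply matrix_vector_mult_add_rdistrib)

lemma Lm_diff: "Lm (M - N) = Lm M - Lm N"
  by (rule Lm_eqI) (simp add: minus_endo.rep_eq blinfun.bilinear_simps ea_Lm_apply matrix_vector_mult_diff_rdistrib)

lemma Lm_scaleR: "Lm (r *\<^sub>R M) = r *\<^sub>R Lm M"
  by (rule Lm_eqI) (simp add: scaleR_endo.rep_eq blinfun.bilinear_simps ea_Lm_apply scaleR_mv)

lemma norm_Lm: "norm (Lm M) = op_norm M"
  by (simp add: norm_endo.rep_eq norm_blinfun.rep_eq op_norm_def Lm_def Ea_inverse
      bounded_linear_Blinfun_apply[OF bl_mv])

lemma bl_Lm: "bounded_linear (Lm :: complex^'n^'n \<Rightarrow> _)"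
proof -
  have "linear (Lm :: complex^'n^'n \<Rightarrow> _)"
    by (rule linearI) (simp_all add: Lm_add Lm_scaleR)
  then show ?thesis by (rule linear_conv_bounded_linear[THEN iffD1])
qed

lemma norm_vec_le_sum: "norm (x::'a::real_normed_vector^'n) \<le> (\<Sum>i\<in>UNIV. norm (x$i))"
  unfolding norm_vec_def by (rule L2_set_le_sum) simp

lemma bl_Rm: "bounded_linear (Rm :: (complex^'n) endo \<Rightarrow> complex^'n^'n)"
proof (rule bounded_linear_intro)
  fix f g :: "(complex^'n) endo" and r :: real
  show "Rm (f + g) = Rm f + Rm g"
    by (simp add: Rm_def vec_eq_iff plus_endo.rep_eq blinfun.bilinear_simps)
  show "Rm (r *\<^sub>R f) = r *\<^sub>R Rm f"
    by (simp add: Rm_def vec_eq_iff scaleR_endo.rep_eq blinfun.bilinear_simps)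
  have e: "norm (Rm f $ i $ j) \<le> norm f" for i j
  proof -
    have "norm (Rm f $ i $ j) \<le> norm (blinfun_apply (ea f) (axis j 1))"
      unfolding Rm_def vec_lambda_beta by (rule Finite_Cartesian_Product.norm_nth_le)
    also have "\<dots> \<le> norm (ea f) * norm (axis j (1::complex))" by (rule norm_blinfun)
    finally show ?thesis by (simp add: norm_endo.rep_eq norm_axis_1)
  qed
  have "norm (Rm f) \<le> (\<Sum>i\<in>UNIV. \<Sum>j\<in>UNIV. norm (Rm f $ i $ j))"
    using norm_vec_le_sum[of "Rm f"] norm_vec_le_sum[of "Rm f $ _"]
    by (meson order_trans sum_mono)
  also have "\<dots> \<le> (\<Sum>i\<in>(UNIV::'n set). \<Sum>j\<in>(UNIV::'n set). norm f)"
    by (intro sum_mono e)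
  also have "\<dots> = norm f * (real CARD('n) * real CARD('n))" by (simp add: algebra_simps)
  finally show "norm (Rm f) \<le> norm f * (real CARD('n) * real CARD('n))" .
qed

lemma Lm_pow: "Lm M ^ k = Lm (mpow M k)"
  by (induction k) (simp_all add: Lm_one Lm_mult)

lemma Lm_mexp: "Lm (mexp M) = exp (Lm M)"
proof -
  interpret R: bounded_linear Rm by (rule bl_Rm)
  interpret L: bounded_linear Lm by (rule bl_Lm)
  have s1: "(\<lambda>k. Lm M ^ k /\<^sub>R fact k) sums exp (Lm M)"
    unfolding exp_def by (rule summable_sums[OF summable_exp_generic])
  have eq: "Rm (Lm M ^ k /\<^sub>R fact k) = (1 / fact k) *\<^sub>R mpow M k" for k
    by (simp add: Lm_pow R.scaleR Rm_Lm divide_inverse_commute)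
  have "(\<lambda>k. Rm (Lm M ^ k /\<^sub>R fact k)) sums Rm (exp (Lm M))"
    by (rule R.sums[OF s1])
  then have "summable (\<lambda>k. (1 / fact k) *\<^sub>R mpow M k)"
    unfolding eq by (rule sums_summable)
  then have "(\<lambda>k. (1 / fact k) *\<^sub>R mpow M k) sums mexp M"
    unfolding mexp_def by (rule summable_sums)
  then have "(\<lambda>k. Lm ((1 / fact k) *\<^sub>R mpow M k)) sums Lm (mexp M)"
    by (rule L.sums)
  moreover have "Lm ((1 / fact k) *\<^sub>R mpow M k) = Lm M ^ k /\<^sub>R fact k" for k
    by (simp add: Lm_scaleR Lm_pow divide_inverse_commute)
  ultimately show ?thesis using s1 sums_unique2 by simp
qed

definition Bm :: "complex^'n^'n \<Rightarrow> (complex^'n) endo" where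
  "Bm H = Lm (cscale \<i> H)"

lemma cscale_real: "cscale (\<i> * complex_of_real t) H = t *\<^sub>R cscale \<i> H"
  unfolding vec_eq_iff vector_scaleR_component cscale_def vec_lambda_beta
  by (simp add: scaleR_conv_of_real mult_ac)

lemma cscale_real2: "cscale (- \<i> * complex_of_real t) H = (- t) *\<^sub>R cscale \<i> H"
  unfolding vec_eq_iff vector_scaleR_component cscale_def vec_lambda_beta
  by (simp add: scaleR_conv_of_real mult_ac)

lemma Lm_conj: "Lm (conj_evol H t X) = exp (t *\<^sub>R Bm H) * Lm X * exp ((- t) *\<^sub>R Bm H)"
  unfolding conj_evol_def Lm_mult Lm_mexp cscale_real cscale_real2 Lm_scaleR Bm_def by (rule refl)

lemma cscale_mult_left: "cscale c A ** B = cscale c (A ** B)"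
  by (simp add: vec_eq_iff cscale_def matrix_matrix_mult_def sum_distrib_left mult.assoc)

lemma cscale_mult_right: "A ** cscale c B = cscale c (A ** B)"
  by (simp add: vec_eq_iff cscale_def matrix_matrix_mult_def sum_distrib_left mult_ac)

lemma cscale_diff: "cscale c (A - B) = cscale c A - cscale c B"
  by (simp add: vec_eq_iff cscale_def algebra_simps)

lemma cscale_cscale: "cscale a (cscale b A) = cscale (a * b) A"
  by (simp add: vec_eq_iff cscale_def mult.assoc)

lemma cscale_one: "cscale 1 A = A"
  by (simp add: vec_eq_iff cscale_def)

lemma comm_cscale: "commutator H (cscale c X) = cscale c (commutator H X)"
  by (simp add: commutator_def cscale_mult_left cscale_mult_right cscale_diff)

lemma conj_cscale: "conj_evol H t (cscale c X) = cscale c (conj_evol H t X)"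
  by (simp add: conj_evol_def cscale_mult_left cscale_mult_right)

lemma Lm_comm: "Lm (cscale \<i> (commutator H X)) = Bm H * Lm X - Lm X * Bm H"
proof -
  have "cscale \<i> (commutator H X) = cscale \<i> H ** X - X ** cscale \<i> H"
    by (simp add: commutator_def cscale_diff cscale_mult_left cscale_mult_right)
  then show ?thesis by (simp add: Lm_diff Lm_mult Bm_def)
qed

lemma deriv_conj:
  "((\<lambda>t. conj_evol H t X) has_vector_derivative conj_evol H t (cscale \<i> (commutator H X))) (at t)"
proof -
  define B where "B = Bm H"
  have e1: "((\<lambda>t. exp (t *\<^sub>R B)) has_vector_derivative exp (t *\<^sub>R B) * B) (at t)"
    by (rule exp_scaleR_has_vector_derivative_right)
  have e2: "((\<lambda>t. exp (t *\<^sub>R (- B))) has_vector_derivative (- B) * exp (t *\<^sub>R (- B))) (at t)"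
    by (rule exp_scaleR_has_vector_derivative_left)
  have e1': "((\<lambda>t. exp (t *\<^sub>R B) * Lm X) has_vector_derivative exp (t *\<^sub>R B) * B * Lm X) (at t)"
    using has_vector_derivative_mult_left[OF e1] .
  have g: "((\<lambda>t. exp (t *\<^sub>R B) * Lm X * exp (t *\<^sub>R (- B))) has_vector_derivative
      exp (t *\<^sub>R B) * Lm X * ((- B) * exp (t *\<^sub>R (- B))) + exp (t *\<^sub>R B) * B * Lm X * exp (t *\<^sub>R (- B))) (at t)"
    by (rule has_vector_derivative_mult[OF e1' e2])
  have eqd: "exp (t *\<^sub>R B) * Lm X * ((- B) * exp (t *\<^sub>R (- B))) + exp (t *\<^sub>R B) * B * Lm X * exp (t *\<^sub>R (- B))
      = Lm (conj_evol H t (cscale \<i> (commutator H X)))"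
    unfolding Lm_conj Lm_comm B_def[symmetric] scaleR_minus_left scaleR_minus_right
    by (simp add: algebra_simps)
  have fe: "(\<lambda>t. exp (t *\<^sub>R B) * Lm X * exp (t *\<^sub>R (- B))) = (\<lambda>t. Lm (conj_evol H t X))"
    unfolding Lm_conj B_def scaleR_minus_left scaleR_minus_right by simp
  have "((\<lambda>t. Lm (conj_evol H t X)) has_vector_derivative Lm (conj_evol H t (cscale \<i> (commutator H X)))) (at t)"
    using g unfolding eqd fe .
  from bounded_linear.has_vector_derivative[OF bl_Rm this] show ?thesis by (simp add: Rm_Lm)
qed

lemma nth_vderiv_Suc: "nth_vderiv (Suc p) f = (\<lambda>x. vector_derivative (nth_vderiv p f) (at x))"
  by (simp add: nth_vderiv_def)

lemma ND: "nth_vderiv p (\<lambda>t. conj_evol H t A) = (\<lambda>t. conj_evol H t (cscale (\<i>^p) (nested_comm H p A)))"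
proof (induction p)
  case 0 then show ?case by (simp add: nth_vderiv_def cscale_one)
next
  case (Suc p)
  show ?case
    unfolding nth_vderiv_Suc Suc vector_derivative_at[OF deriv_conj]
    by (simp add: comm_cscale cscale_cscale)
qed

lemma cinner_cnj: "cnj (cinner v w) = cinner w v"
  by (simp add: cinner_def mult.commute)

lemma skew_zero:
  assumes herm: "hermitian H"
  shows "(cscale \<i> H *v w) \<bullet> w = 0"
proof -
  have r: "cnj (cinner (H *v w) w) = cinner (H *v w) w"
    by (simp add: cinner_cnj herm_cinner[OF herm])
  then have "Im (cinner (H *v w) w) = 0" by (metis Reals_cnj_iff complex_is_Real_iff)
  then show ?thesis
    by (simp add: inner_cinner cscale_mv cinner_smult_left)
qed

lemma bl_app: "bounded_linear (\<lambda>f::('a::euclidean_space) endo. blinfun_apply (ea f) x)"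
proof -
  have "bounded_linear (ea :: 'a endo \<Rightarrow> _)"
    by (rule bounded_linear_intro[where K=1])
       (simp_all add: plus_endo.rep_eq scaleR_endo.rep_eq norm_endo.rep_eq)
  then show ?thesis by (rule bounded_linear_compose[OF blinfun.bounded_linear_left])
qed

lemma norm_expB:
  assumes herm: "hermitian H"
  shows "norm (exp (t *\<^sub>R Bm H)) \<le> 1"
  unfolding norm_endo.rep_eq
proof (rule norm_blinfun_bound)
  fix x :: "complex^'a"
  define B where "B = Bm H"
  define u where "u s = blinfun_apply (ea (exp (s *\<^sub>R B))) x" for s
  have du: "(u has_vector_derivative (cscale \<i> H *v u s)) (at s)" for s
  proof -
    have "(u has_vector_derivative blinfun_apply (ea (B * exp (s *\<^sub>R B))) x) (at s)"
      unfolding u_def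
      by (rule bounded_linear.has_vector_derivative[OF bl_app exp_scaleR_has_vector_derivative_left])
    moreover have "blinfun_apply (ea (B * exp (s *\<^sub>R B))) x = cscale \<i> H *v u s"
      by (simp add: times_endo.rep_eq u_def B_def Bm_def ea_Lm_apply)
    ultimately show ?thesis by simp
  qed
  have dh: "((\<lambda>s. u s \<bullet> u s) has_derivative (\<lambda>d. 0)) (at s within UNIV)" for s
  proof -
    have d1: "(u has_derivative (\<lambda>d. d *\<^sub>R (cscale \<i> H *v u s))) (at s within UNIV)"
      using du[of s] unfolding has_vector_derivative_def by simp
    have "((\<lambda>s. u s \<bullet> u s) has_derivative
        (\<lambda>d. u s \<bullet> (d *\<^sub>R (cscale \<i> H *v u s)) + (d *\<^sub>R (cscale \<i> H *v u s)) \<bullet> u s)) (at s within UNIV)"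
      by (rule has_derivative_inner[OF d1 d1])
    moreover have "(\<lambda>d. u s \<bullet> (d *\<^sub>R (cscale \<i> H *v u s)) + (d *\<^sub>R (cscale \<i> H *v u s)) \<bullet> u s) = (\<lambda>d. 0)"
      using skew_zero[OF herm, of "u s"] by (simp add: inner_commute)
    ultimately show ?thesis by simp
  qed
  obtain c where c: "\<And>s. u s \<bullet> u s = c"
    using has_derivative_zero_constant[OF convex_UNIV dh] by blast
  have u0: "u 0 = x" by (simp add: u_def one_endo.rep_eq)
  have "u t \<bullet> u t = x \<bullet> x" using c[of t] c[of 0] u0 by simp
  then have "norm (u t) = norm x" by (simp add: norm_eq_sqrt_inner)
  then show "norm (blinfun_apply (ea (exp (t *\<^sub>R Bm H))) x) \<le> 1 * norm x"
    by (simp add: u_def B_def)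
qed simp

lemma op_norm_conj:
  assumes herm: "hermitian H"
  shows "op_norm (conj_evol H t N) \<le> op_norm N"
proof -
  have n1: "norm (exp (t *\<^sub>R Bm H)) \<le> 1" and n2: "norm (exp ((- t) *\<^sub>R Bm H)) \<le> 1"
    using norm_expB[OF herm] by blast+
  have "op_norm (conj_evol H t N) = norm (exp (t *\<^sub>R Bm H) * Lm N * exp ((- t) *\<^sub>R Bm H))"
    by (simp add: norm_Lm[symmetric] Lm_conj)
  also have "\<dots> \<le> norm (exp (t *\<^sub>R Bm H) * Lm N) * norm (exp ((- t) *\<^sub>R Bm H))"
    by (rule norm_mult_ineq)
  also have "\<dots> \<le> norm (exp (t *\<^sub>R Bm H) * Lm N) * 1"
    by (rule mult_left_mono[OF n2 norm_ge_zero])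
  also have "\<dots> \<le> norm (exp (t *\<^sub>R Bm H)) * norm (Lm N)"
    using norm_mult_ineq by simp
  also have "\<dots> \<le> 1 * norm (Lm N)"
    by (rule mult_right_mono[OF n1 norm_ge_zero])
  finally show ?thesis by (simp add: norm_Lm)
qed

lemma norm_smult: "norm (c *s (v::complex^'n)) = cmod c * norm v"
  unfolding norm_vec_def
  by (simp add: L2_set_right_distrib norm_mult)

lemma op_norm_cscale: "op_norm (cscale c M) \<le> cmod c * op_norm M"
  unfolding op_norm_def[of "cscale c M"]
proof (rule onorm_bound)
  show "0 \<le> cmod c * op_norm M" using op_norm_nonneg[of M] by simp
  fix x
  have "norm (cscale c M *v x) = cmod c * norm (M *v x)" by (simp add: cscale_mv norm_smult)
  also have "\<dots> \<le> cmod c * (op_norm M * norm x)"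
    by (rule mult_left_mono[OF op_norm_le norm_ge_zero])
  finally show "norm (cscale c M *v x) \<le> cmod c * op_norm M * norm x" by (simp add: mult.assoc)
qed

theorem lemma5:
  fixes H A :: "complex ^ 'n ^ 'n"
  assumes herm: "hermitian H"
    and gap: "omega_max H > 0"
  shows "(\<forall>p\<ge>1. \<forall>\<phi>::real.
            (\<forall>k<p. nth_vderiv k (\<lambda>\<theta>. conj_evol H \<theta> A) differentiable (at \<phi>)) \<and>
            nth_vderiv p (\<lambda>\<theta>. conj_evol H \<theta> A) \<phi>
              = cscale (\<i> ^ p) (conj_evol H \<phi> (nested_comm H p A)))
       \<and> (\<forall>p\<ge>2. \<forall>\<phi>::real.
            op_norm (nth_vderiv p (\<lambda>\<theta>. conj_evol H \<theta> A) \<phi>)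
              \<le> (2 * omega_max H) ^ p * op_norm (nested_comm H 2 A) / (4 * (omega_max H)\<^sup>2))"
proof -
  have D: "nth_vderiv k (\<lambda>\<theta>. conj_evol H \<theta> A) differentiable (at \<phi>)" for k \<phi>
    unfolding ND using deriv_conj differentiableI_vector by blast
  have V: "nth_vderiv p (\<lambda>\<theta>. conj_evol H \<theta> A) \<phi> = cscale (\<i> ^ p) (conj_evol H \<phi> (nested_comm H p A))"
    for p \<phi> unfolding ND by (simp add: conj_cscale)
  have N: "op_norm (nth_vderiv p (\<lambda>\<theta>. conj_evol H \<theta> A) \<phi>)
      \<le> (2 * omega_max H) ^ p * op_norm (nested_comm H 2 A) / (4 * (omega_max H)\<^sup>2)"
    if p: "2 \<le> p" for p \<phi>
  proof -
  define w where "w = omega_max H"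
  have w: "w > 0" using gap by (simp add: w_def)
  obtain q where q: "p = q + 2" using p by (metis add.commute le_Suc_ex)
  have "op_norm (nth_vderiv p (\<lambda>\<theta>. conj_evol H \<theta> A) \<phi>)
      = op_norm (cscale (\<i> ^ p) (conj_evol H \<phi> (nested_comm H p A)))"
    unfolding ND by (simp add: conj_cscale)
  also have "\<dots> \<le> cmod (\<i> ^ p) * op_norm (conj_evol H \<phi> (nested_comm H p A))"
    by (rule op_norm_cscale)
  also have "\<dots> = op_norm (conj_evol H \<phi> (nested_comm H p A))"
    by (simp add: norm_power)
  also have "\<dots> \<le> op_norm (nested_comm H p A)"
    by (rule op_norm_conj[OF herm])
  also have "\<dots> \<le> (2 * w) ^ q * op_norm (nested_comm H 2 A)"
    unfolding q w_def by (rule nested_bound[OF herm gap])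
  also have "\<dots> = (2 * w) ^ p * op_norm (nested_comm H 2 A) / (4 * w\<^sup>2)"
    using w by (simp add: q power_add field_simps power2_eq_square)
  finally show "op_norm (nth_vderiv p (\<lambda>\<theta>. conj_evol H \<theta> A) \<phi>)
      \<le> (2 * omega_max H) ^ p * op_norm (nested_comm H 2 A) / (4 * (omega_max H)\<^sup>2)"
    by (simp add: w_def)
  qed
  show ?thesis using D V N by blast
qed

end
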